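(* Consider the system $x[k+1]=Ax[k]+w[k]$, $y[k]=Cx[k]+v[k]$, where $A=\mathrm{diag}(\lambda_1,\dots,\lambda_n)$ with $0\le|\lambda_i|<1$ for all $i$, the process noise covariance $W$ is diagonal (and positive semidefinite), and the measurement noise covariance is $V=\mathbf{0}$. Then for every sensor selection $\mu$: (a) for all $i\in\{1,\dots,n\}$, $W_{ii}\le(\Sigma(\mu))_{ii}\le \frac{W_{ii}}{1-\lambda_i^2}$; (b) if $W_{ii}=0$ for some $i$, then $(\Sigma(\mu))_{ii}=0$; (c) if $\lambda_i=0$ for some $i$, then $(\Sigma(\mu))_{ii}=W_{ii}$; (d) if for some $i$, $W_{ii}\neq0$ and the $i$th column of $C(\mu)$ is zero, then $(\Sigma(\mu))_{ii}=\frac{W_{ii}}{1-\lambda_i^2}$; (e) if for some $i$, $\mathbf{e}_i\in\mathrm{rowspace}(C(\mu))$, then $(\Sigma(\mu))_{ii}=W_{ii}$.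
   Context: Here $w[k]$ and $v[k]$ are uncorrelated zero-mean white Gaussian noise processes with covariances $W$ and $V$. The rows of $C$ are grouped into candidate sensors $i=1,\dots,q$ (sensor $i$ contributes rows $C_i$); a sensor selection is $\mu\in\{0,1\}^q$, and $C(\mu)$ stacks the $C_i$ with $\mu_i=1$, $V(\mu)$ being the corresponding (here zero) noise covariance. $\Sigma(\mu)$ is the limit as $k\to\infty$ of the a priori error covariance $\Sigma_{k|k-1}(\mu)$ of the Kalman filter using the selected sensors; it satisfies $\Sigma(\mu)=A\Sigma(\mu)A^T+W-A\Sigma(\mu)C(\mu)^T(C(\mu)\Sigma(\mu)C(\mu)^T+V(\mu))^{-1}C(\mu)\Sigma(\mu)A^T$, with inverses interpreted as pseudo-inverses when singular. $\mathbf{e}_i$ denotes the row vector with $1$ in position $i$ and zeros elsewhere. *)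

theory Defs
  imports Complex_Main "Jordan_Normal_Form.Matrix"
begin

text \<open>Moore-Penrose pseudo-inverse (the unique matrix satisfying the four Penrose conditions).
  For invertible M it coincides with the ordinary inverse.\<close>
definition pinv :: "real mat \<Rightarrow> real mat" where
  "pinv M = (THE X. X \<in> carrier_mat (dim_col M) (dim_row M) \<and> M * X * M = M \<and> X * M * X = X
        \<and> transpose_mat (M * X) = M * X \<and> transpose_mat (X * M) = X * M)"

text \<open>Stacked measurement matrix C(mu): rows of the selected sensors 0..q-1 (in order),
  each sensor i contributing the rows of Cs i (a matrix with n columns).\<close>
definition sel_C :: "nat \<Rightarrow> nat \<Rightarrow> (nat \<Rightarrow> real mat) \<Rightarrow> (nat \<Rightarrow> bool) \<Rightarrow> real mat" where
  "sel_C n q Cs mu = mat_of_rows n (concat (map (\<lambda>i. if mu i then rows (Cs i) else []) [0..<q]))"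

text \<open>A priori error covariance Sigma_{k|k-1} of the Kalman filter, starting from the
  initial covariance P0 = Sigma_{0|-1}.\<close>
primrec kf_prior :: "real mat \<Rightarrow> real mat \<Rightarrow> real mat \<Rightarrow> real mat \<Rightarrow> real mat \<Rightarrow> nat \<Rightarrow> real mat" where
  "kf_prior A W C V P0 0 = P0"
| "kf_prior A W C V P0 (Suc k) =
     (let P = kf_prior A W C V P0 k in
      A * P * transpose_mat A + W
      - A * P * transpose_mat C * pinv (C * P * transpose_mat C + V) * C * P * transpose_mat A)"

definition kf_limit :: "nat \<Rightarrow> real mat \<Rightarrow> real mat \<Rightarrow> real mat \<Rightarrow> real mat \<Rightarrow> real mat \<Rightarrow> real mat \<Rightarrow> bool" where
  "kf_limit n A W C V P0 S \<longleftrightarrow> S \<in> carrier_mat n n \<and>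
     (\<forall>a<n. \<forall>b<n. (\<lambda>k. kf_prior A W C V P0 k $$ (a, b)) \<longlonglongrightarrow> S $$ (a, b))"

definition psd_mat :: "nat \<Rightarrow> real mat \<Rightarrow> bool" where
  "psd_mat n P \<longleftrightarrow> P \<in> carrier_mat n n \<and> transpose_mat P = P \<and>
     (\<forall>x \<in> carrier_vec n. 0 \<le> x \<bullet> (P *\<^sub>v x))"

definition row_space :: "real mat \<Rightarrow> real vec set" where
  "row_space C = {transpose_mat C *\<^sub>v y | y. y \<in> carrier_vec (dim_row C)}"

end

theory Submission
  imports Defs "Jordan_Normal_Form.Determinant"
begin


lemma assoc': fixes A :: "'a::semiring_0 mat"
  shows "dim_col A = dim_row B \<Longrightarrow> dim_col B = dim_row C \<Longrightarrow> (A*B)*C = A*(B*C)"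
  by (rule assoc_mult_mat[of A "dim_row A" "dim_col A" B "dim_col B" C "dim_col C"], auto)
lemma trmult': fixes A :: "'a::comm_semiring_0 mat"
  shows "dim_col A = dim_row B \<Longrightarrow> transpose_mat (A*B) = transpose_mat B * transpose_mat A"
  by (rule transpose_mult[of A "dim_row A" "dim_col A" B "dim_col B"], auto)

definition penrose :: "real mat \<Rightarrow> real mat \<Rightarrow> bool" where
"penrose M X \<longleftrightarrow> X \<in> carrier_mat (dim_col M) (dim_row M) \<and> M * X * M = M \<and> X * M * X = X
   \<and> transpose_mat (M * X) = M * X \<and> transpose_mat (X * M) = X * M"

lemma penrose_unique:
  assumes X: "penrose M X" and Y: "penrose M Y"
  shows "X = Y"
proof -
  from X have d: "dim_row X = dim_col M" "dim_col X = dim_row M" and X1: "M * X * M = M" and X2: "X * M * X = X"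
    and X3: "transpose_mat (M * X) = M * X" and X4: "transpose_mat (X * M) = X * M"
    unfolding penrose_def by auto
  from Y have e: "dim_row Y = dim_col M" "dim_col Y = dim_row M" and Y1: "M * Y * M = M" and Y2: "Y * M * Y = Y"
    and Y3: "transpose_mat (M * Y) = M * Y" and Y4: "transpose_mat (Y * M) = Y * M"
    unfolding penrose_def by auto
  note ss = d e assoc' trmult'
  have X1': "M * (X * M) = M" using X1 by (simp add: ss)
  have Y1': "M * (Y * M) = M" using Y1 by (simp add: ss)
  have X2': "X * (M * X) = X" using X2 by (simp add: ss)
  have Y2': "Y * (M * Y) = Y" using Y2 by (simp add: ss)
  have X3': "transpose_mat X * transpose_mat M = M * X" using X3 by (simp add: ss)
  have Y3': "transpose_mat Y * transpose_mat M = M * Y" using Y3 by (simp add: ss)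
  have X4': "transpose_mat M * transpose_mat X = X * M" using X4 by (simp add: ss)
  have Y4': "transpose_mat M * transpose_mat Y = Y * M" using Y4 by (simp add: ss)
  have MT: "transpose_mat M = transpose_mat M * (transpose_mat Y * transpose_mat M)"
    using arg_cong[OF Y1', of transpose_mat] by (simp add: ss)
  have MT': "transpose_mat M = transpose_mat M * (transpose_mat X * transpose_mat M)"
    using arg_cong[OF X1', of transpose_mat] by (simp add: ss)
  have "X = X * (transpose_mat X * transpose_mat M)" using X2' X3' by simp
  also have "\<dots> = X * (transpose_mat X * (transpose_mat M * (transpose_mat Y * transpose_mat M)))"
    using MT by simp
  also have "\<dots> = X * ((transpose_mat X * transpose_mat M) * (transpose_mat Y * transpose_mat M))"
    by (simp add: ss)
  also have "\<dots> = X * ((M * X) * (M * Y))" using X3' Y3' by simp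
  also have "\<dots> = (X * (M * X)) * M * Y" by (simp add: ss)
  also have "\<dots> = X * M * Y" using X2' by simp
  finally have 1: "X = X * M * Y" .
  have "Y = (transpose_mat M * transpose_mat Y) * Y" using Y2 Y4' by simp
  also have "\<dots> = ((transpose_mat M * (transpose_mat X * transpose_mat M)) * transpose_mat Y) * Y"
    using MT' by simp
  also have "\<dots> = ((transpose_mat M * transpose_mat X) * (transpose_mat M * transpose_mat Y)) * Y"
    by (simp add: ss)
  also have "\<dots> = ((X * M) * (Y * M)) * Y" using X4' Y4' by simp
  also have "\<dots> = X * M * (Y * (M * Y))" by (simp add: ss)
  also have "\<dots> = X * M * Y" using Y2' by simp
  finally show ?thesis using 1 by simp
qed



lemma mult_mat_sum: "i < dim_row A \<Longrightarrow> j < dim_col B \<Longrightarrow> dim_col A = dim_row B \<Longrightarrow>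
  (A * B) $$ (i,j) = (\<Sum>l\<in>{0..<dim_row B}. A $$ (i,l) * B $$ (l,j))"
  unfolding index_mult_mat(1) scalar_prod_def by (rule sum.cong, auto)

lemma mult_mat_vec_sum: "i < dim_row A \<Longrightarrow> dim_col A = dim_vec v \<Longrightarrow>
  (A *\<^sub>v v) $ i = (\<Sum>l\<in>{0..<dim_vec v}. A $$ (i,l) * v $ l)"
  unfolding index_mult_mat_vec scalar_prod_def by (rule sum.cong, auto)

lemma full_rank_fact:
  fixes M :: "real mat"
  assumes "M \<in> carrier_mat k m"
  shows "\<exists>r B F. B \<in> carrier_mat k r \<and> F \<in> carrier_mat r m \<and> M = B * F
    \<and> (\<forall>x\<in>carrier_vec r. B *\<^sub>v x = 0\<^sub>v k \<longrightarrow> x = 0\<^sub>v r)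
    \<and> (\<forall>x\<in>carrier_vec r. transpose_mat F *\<^sub>v x = 0\<^sub>v m \<longrightarrow> x = 0\<^sub>v r)"
  using assms
proof (induction m arbitrary: M)
  case 0
  show ?case
    by (rule exI[of _ 0], rule exI[of _ "0\<^sub>m k 0"], rule exI[of _ "0\<^sub>m 0 0"], insert 0, auto)
next
  case (Suc m)
  note Mc = Suc.prems
  define M0 where "M0 = mat k m (\<lambda>(i,j). M $$ (i,j))"
  define c where "c = col M m"
  have M0c: "M0 \<in> carrier_mat k m" unfolding M0_def by auto
  from Suc.IH[OF M0c] obtain r B F where B: "B \<in> carrier_mat k r" and F: "F \<in> carrier_mat r m"
    and MBF: "M0 = B * F" and Binj: "\<forall>x\<in>carrier_vec r. B *\<^sub>v x = 0\<^sub>v k \<longrightarrow> x = 0\<^sub>v r"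
    and Finj: "\<forall>x\<in>carrier_vec r. transpose_mat F *\<^sub>v x = 0\<^sub>v m \<longrightarrow> x = 0\<^sub>v r" by blast
  have Mij: "M $$ (i,j) = (\<Sum>l\<in>{0..<r}. B $$ (i,l) * F $$ (l,j))" if "i < k" "j < m" for i j
  proof -
    have "M $$ (i,j) = M0 $$ (i,j)" using that unfolding M0_def by simp
    also have "\<dots> = (\<Sum>l\<in>{0..<r}. B $$ (i,l) * F $$ (l,j))" unfolding MBF
      using B F that by (subst mult_mat_sum, auto)
    finally show ?thesis .
  qed
  have ci: "c $ i = M $$ (i, m)" if "i < k" for i using that Mc unfolding c_def by auto
  show ?case
  proof (cases "\<exists>y\<in>carrier_vec r. B *\<^sub>v y = c")
    case True
    then obtain y where y: "y \<in> carrier_vec r" and By: "B *\<^sub>v y = c" by blast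
    define F' where "F' = mat r (Suc m) (\<lambda>(i,j). if j < m then F $$ (i,j) else y $ i)"
    have F'c: "F' \<in> carrier_mat r (Suc m)" unfolding F'_def by auto
    have "M = B * F'"
    proof (rule eq_matI)
      fix i j assume i: "i < dim_row (B * F')" and j: "j < dim_col (B * F')"
      hence i: "i < k" and j: "j < Suc m" using B F'c by auto
      have "(B * F') $$ (i,j) = (\<Sum>l\<in>{0..<r}. B $$ (i,l) * F' $$ (l,j))"
        using B F'c i j by (subst mult_mat_sum, auto)
      also have "\<dots> = M $$ (i,j)"
      proof (cases "j < m")
        case True
        then show ?thesis using Mij[OF i True] unfolding F'_def by (auto intro!: sum.cong)
      next
        case False
        hence jm: "j = m" using j by auto
        have "M $$ (i,j) = c $ i" using ci i jm by simp
        also have "\<dots> = (\<Sum>l\<in>{0..<r}. B $$ (i,l) * y $ l)" unfolding By[symmetric]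
          using B y i by (subst mult_mat_vec_sum, auto)
        finally show ?thesis unfolding F'_def using jm by (auto intro!: sum.cong)
      qed
      finally show "M $$ (i,j) = (B * F') $$ (i,j)" by simp
    qed (insert Mc B F'c, auto)
    moreover have "\<forall>x\<in>carrier_vec r. transpose_mat F' *\<^sub>v x = 0\<^sub>v (Suc m) \<longrightarrow> x = 0\<^sub>v r"
    proof (intro ballI impI)
      fix x :: "real vec" assume x: "x \<in> carrier_vec r" and 0: "transpose_mat F' *\<^sub>v x = 0\<^sub>v (Suc m)"
      have "transpose_mat F *\<^sub>v x = 0\<^sub>v m"
      proof (rule eq_vecI)
        fix j assume "j < dim_vec (0\<^sub>v m :: real vec)"
        hence j: "j < m" by simp
        have "(transpose_mat F *\<^sub>v x) $ j = (\<Sum>l\<in>{0..<r}. F $$ (l,j) * x $ l)"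
          using F x j by (subst mult_mat_vec_sum, auto)
        also have "\<dots> = (\<Sum>l\<in>{0..<r}. F' $$ (l,j) * x $ l)" unfolding F'_def using j
          by (auto intro!: sum.cong)
        also have "\<dots> = (transpose_mat F' *\<^sub>v x) $ j"
          using F'c x j by (subst mult_mat_vec_sum, auto)
        also have "\<dots> = 0" using 0 j by simp
        finally show "(transpose_mat F *\<^sub>v x) $ j = 0\<^sub>v m $ j" using j by simp
      qed (insert F, auto)
      thus "x = 0\<^sub>v r" using Finj x by auto
    qed
    ultimately show ?thesis using B F'c Binj by blast
  next
    case False
    define B' where "B' = mat k (Suc r) (\<lambda>(i,l). if l < r then B $$ (i,l) else c $ i)"
    define F' where "F' = mat (Suc r) (Suc m) (\<lambda>(l,j). if l < r then (if j < m then F $$ (l,j) else 0)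
       else (if j < m then 0 else 1))"
    have B'c: "B' \<in> carrier_mat k (Suc r)" unfolding B'_def by auto
    have F'c: "F' \<in> carrier_mat (Suc r) (Suc m)" unfolding F'_def by auto
    have "M = B' * F'"
    proof (rule eq_matI)
      fix i j assume i: "i < dim_row (B' * F')" and j: "j < dim_col (B' * F')"
      hence i: "i < k" and j: "j < Suc m" using B'c F'c by auto
      have "(B' * F') $$ (i,j) = (\<Sum>l\<in>{0..<Suc r}. B' $$ (i,l) * F' $$ (l,j))"
        using B'c F'c i j by (subst mult_mat_sum, auto)
      also have "\<dots> = (\<Sum>l\<in>{0..<r}. B' $$ (i,l) * F' $$ (l,j)) + B' $$ (i,r) * F' $$ (r,j)"
        by simp
      also have "\<dots> = M $$ (i,j)"
      proof (cases "j < m")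
        case True
        then show ?thesis using Mij[OF i True] i j unfolding F'_def B'_def by (auto intro!: sum.cong)
      next
        case False
        hence jm: "j = m" using j by auto
        show ?thesis using ci i jm unfolding F'_def B'_def by auto
      qed
      finally show "M $$ (i,j) = (B' * F') $$ (i,j)" by simp
    qed (insert Mc B'c F'c, auto)
    moreover have "\<forall>x\<in>carrier_vec (Suc r). B' *\<^sub>v x = 0\<^sub>v k \<longrightarrow> x = 0\<^sub>v (Suc r)"
    proof (intro ballI impI)
      fix x :: "real vec" assume x: "x \<in> carrier_vec (Suc r)" and 0: "B' *\<^sub>v x = 0\<^sub>v k"
      define x0 where "x0 = vec r (\<lambda>l. x $ l)"
      have x0c: "x0 \<in> carrier_vec r" unfolding x0_def by auto
      have comp: "(B *\<^sub>v x0) $ i + x $ r * c $ i = 0" if i: "i < k" for i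
      proof -
        have "0 = (B' *\<^sub>v x) $ i" using 0 i by simp
        also have "\<dots> = (\<Sum>l\<in>{0..<Suc r}. B' $$ (i,l) * x $ l)"
          using B'c x i by (subst mult_mat_vec_sum, auto)
        also have "\<dots> = (\<Sum>l\<in>{0..<r}. B' $$ (i,l) * x $ l) + B' $$ (i,r) * x $ r" by simp
        also have "(\<Sum>l\<in>{0..<r}. B' $$ (i,l) * x $ l) = (B *\<^sub>v x0) $ i"
          using B x0c i by (subst mult_mat_vec_sum, auto simp: B'_def x0_def intro!: sum.cong)
        finally show ?thesis using i unfolding B'_def by (simp add: mult.commute)
      qed
      have t: "x $ r = 0"
      proof (rule ccontr)
        assume t: "x $ r \<noteq> 0"
        define y where "y = vec r (\<lambda>l. - x0 $ l / x $ r)"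
        have yc: "y \<in> carrier_vec r" unfolding y_def by auto
        have "B *\<^sub>v y = c"
        proof (rule eq_vecI)
          fix i assume "i < dim_vec c"
          hence i: "i < k" unfolding c_def using Mc by auto
          have "(B *\<^sub>v y) $ i = (\<Sum>l\<in>{0..<r}. B $$ (i,l) * y $ l)"
            using B yc i by (subst mult_mat_vec_sum, auto)
          also have "\<dots> = - (\<Sum>l\<in>{0..<r}. B $$ (i,l) * x0 $ l) / x $ r"
            unfolding y_def by (auto simp: sum_divide_distrib sum_negf intro!: sum.cong)
          also have "(\<Sum>l\<in>{0..<r}. B $$ (i,l) * x0 $ l) = (B *\<^sub>v x0) $ i"
            using B x0c i by (subst mult_mat_vec_sum, auto)
          also have "- (B *\<^sub>v x0) $ i / x $ r = c $ i" using comp[OF i] t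
            by (simp add: field_simps)
          finally show "(B *\<^sub>v y) $ i = c $ i" .
        qed (insert B Mc, auto simp: c_def)
        thus False using False yc by blast
      qed
      have "B *\<^sub>v x0 = 0\<^sub>v k"
        by (rule eq_vecI, insert comp t B, auto)
      hence "x0 = 0\<^sub>v r" using Binj x0c by auto
      then show "x = 0\<^sub>v (Suc r)"
      proof -
        assume h: "x0 = 0\<^sub>v r"
        show ?thesis
        proof (rule eq_vecI)
          fix l assume "l < dim_vec (0\<^sub>v (Suc r) :: real vec)"
          hence l: "l < Suc r" by simp
          show "x $ l = 0\<^sub>v (Suc r) $ l"
          proof (cases "l < r")
            case True
            then show ?thesis using arg_cong[OF h, of "\<lambda>v. v $ l"] unfolding x0_def by simp
          next
            case False
            then show ?thesis using t l by (auto simp: less_Suc_eq)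
          qed
        qed (insert x, auto)
      qed
    qed
    moreover have "\<forall>x\<in>carrier_vec (Suc r). transpose_mat F' *\<^sub>v x = 0\<^sub>v (Suc m) \<longrightarrow> x = 0\<^sub>v (Suc r)"
    proof (intro ballI impI)
      fix x :: "real vec" assume x: "x \<in> carrier_vec (Suc r)" and 0: "transpose_mat F' *\<^sub>v x = 0\<^sub>v (Suc m)"
      define x0 where "x0 = vec r (\<lambda>l. x $ l)"
      have x0c: "x0 \<in> carrier_vec r" unfolding x0_def by auto
      have comp: "(transpose_mat F' *\<^sub>v x) $ j = (\<Sum>l\<in>{0..<r}. F' $$ (l,j) * x $ l) + F' $$ (r,j) * x $ r"
        if "j < Suc m" for j
        using F'c x that by (subst mult_mat_vec_sum, auto)
      have t: "x $ r = 0" using comp[of m] 0 unfolding F'_def by simp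
      have "transpose_mat F *\<^sub>v x0 = 0\<^sub>v m"
      proof (rule eq_vecI)
        fix j assume "j < dim_vec (0\<^sub>v m :: real vec)"
        hence j: "j < m" by simp
        have "(transpose_mat F *\<^sub>v x0) $ j = (\<Sum>l\<in>{0..<r}. F $$ (l,j) * x0 $ l)"
          using F x0c j by (subst mult_mat_vec_sum, auto)
        also have "\<dots> = (\<Sum>l\<in>{0..<r}. F' $$ (l,j) * x $ l) + F' $$ (r,j) * x $ r"
          using j by (auto simp: F'_def x0_def intro!: sum.cong)
        also have "\<dots> = (transpose_mat F' *\<^sub>v x) $ j" using comp[of j] j by simp
        finally show "(transpose_mat F *\<^sub>v x0) $ j = 0\<^sub>v m $ j" using 0 j by simp
      qed (insert F, auto)
      hence h: "x0 = 0\<^sub>v r" using Finj x0c by auto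
      show "x = 0\<^sub>v (Suc r)"
      proof (rule eq_vecI)
        fix l assume "l < dim_vec (0\<^sub>v (Suc r) :: real vec)"
        hence l: "l < Suc r" by simp
        show "x $ l = 0\<^sub>v (Suc r) $ l"
        proof (cases "l < r")
          case True
          then show ?thesis using arg_cong[OF h, of "\<lambda>v. v $ l"] unfolding x0_def by simp
        next
          case False
          then show ?thesis using t l by (auto simp: less_Suc_eq)
        qed
      qed (insert x, auto)
    qed
    ultimately show ?thesis using B'c F'c by blast
  qed
qed



lemma vec_self_zero: fixes v :: "real vec"
  assumes v: "v \<in> carrier_vec k" and z: "v \<bullet> v = 0" shows "v = 0\<^sub>v k"
proof -
  have "(\<Sum>i\<in>{0..<k}. v $ i * v $ i) = 0" using z v unfolding scalar_prod_def by simp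
  hence "\<forall>i\<in>{0..<k}. v $ i * v $ i = 0" by (subst sum_nonneg_eq_0_iff[symmetric], auto)
  thus ?thesis using v by (intro eq_vecI, auto)
qed

lemma quad_gram: fixes B :: "real mat"
  assumes B: "B \<in> carrier_mat k r" and v: "v \<in> carrier_vec r"
  shows "v \<bullet> ((transpose_mat B * B) *\<^sub>v v) = (B *\<^sub>v v) \<bullet> (B *\<^sub>v v)"
proof -
  have "v \<bullet> ((transpose_mat B * B) *\<^sub>v v) = v \<bullet> (transpose_mat B *\<^sub>v (B *\<^sub>v v))"
    using B v by (subst assoc_mult_mat_vec[of _ r k _ r], auto)
  also have "\<dots> = (transpose_mat B *\<^sub>v (B *\<^sub>v v)) \<bullet> v"
    using B v by (intro comm_scalar_prod[of _ r], auto)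
  also have "\<dots> = (B *\<^sub>v v) \<bullet> (B *\<^sub>v v)"
    using B v by (intro transpose_vec_mult_scalar, auto)
  finally show ?thesis .
qed

lemma gram_inv: fixes B :: "real mat"
  assumes B: "B \<in> carrier_mat k r" and inj: "\<forall>x\<in>carrier_vec r. B *\<^sub>v x = 0\<^sub>v k \<longrightarrow> x = 0\<^sub>v r"
  shows "\<exists>G. G \<in> carrier_mat r r \<and> (transpose_mat B * B) * G = 1\<^sub>m r \<and> G * (transpose_mat B * B) = 1\<^sub>m r
     \<and> transpose_mat G = G"
proof -
  let ?N = "transpose_mat B * B"
  have N: "?N \<in> carrier_mat r r" using B by auto
  have "det ?N \<noteq> 0"
  proof
    assume "det ?N = 0"
    then obtain v where v: "v \<in> carrier_vec r" "v \<noteq> 0\<^sub>v r" "?N *\<^sub>v v = 0\<^sub>v r"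
      using det_0_iff_vec_prod_zero_field[OF N] by blast
    have "(B *\<^sub>v v) \<bullet> (B *\<^sub>v v) = 0" using quad_gram[OF B v(1)] v by simp
    hence "B *\<^sub>v v = 0\<^sub>v k" by (intro vec_self_zero carrier_vecI, insert B, auto)
    thus False using inj v by auto
  qed
  from det_non_zero_imp_unit[OF N this, of "()"]
  obtain G where G: "G \<in> carrier_mat r r" and GN: "G * ?N = 1\<^sub>m r" and NG: "?N * G = 1\<^sub>m r"
    unfolding Units_def ring_mat_def by auto
  have NT: "transpose_mat ?N = ?N" using B by (simp add: transpose_mult[of _ r k _ r])
  have "transpose_mat G = transpose_mat G * (?N * G)" using NG G by simp
  also have "\<dots> = (transpose_mat G * ?N) * G" using G N by (simp add: assoc_mult_mat[of _ r r _ r _ r])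
  also have "transpose_mat G * ?N = transpose_mat (?N * G)"
    using G N NT by (simp add: transpose_mult[of _ r r _ r])
  also have "\<dots> = 1\<^sub>m r" using NG by simp
  finally have "transpose_mat G = G" using G by simp
  thus ?thesis using G GN NG by blast
qed

lemma penrose_exists: fixes M :: "real mat"
  shows "\<exists>X. penrose M X"
proof -
  have Mc: "M \<in> carrier_mat (dim_row M) (dim_col M)" by auto
  obtain r B F where B: "B \<in> carrier_mat (dim_row M) r" and F: "F \<in> carrier_mat r (dim_col M)"
    and MBF: "M = B * F" and Binj: "\<forall>x\<in>carrier_vec r. B *\<^sub>v x = 0\<^sub>v (dim_row M) \<longrightarrow> x = 0\<^sub>v r"
    and Finj: "\<forall>x\<in>carrier_vec r. transpose_mat F *\<^sub>v x = 0\<^sub>v (dim_col M) \<longrightarrow> x = 0\<^sub>v r"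
    using full_rank_fact[OF Mc] by blast
  obtain G1 where G1: "G1 \<in> carrier_mat r r" and G1a: "(transpose_mat B * B) * G1 = 1\<^sub>m r"
    and G1b: "G1 * (transpose_mat B * B) = 1\<^sub>m r" and G1s: "transpose_mat G1 = G1"
    using gram_inv[OF B Binj] by blast
  have FT: "transpose_mat F \<in> carrier_mat (dim_col M) r" using F by simp
  obtain G2 where G2: "G2 \<in> carrier_mat r r" and G2a: "(F * transpose_mat F) * G2 = 1\<^sub>m r"
    and G2b: "G2 * (F * transpose_mat F) = 1\<^sub>m r" and G2s: "transpose_mat G2 = G2"
    using gram_inv[OF FT Finj] by auto
  define X where "X = transpose_mat F * G2 * G1 * transpose_mat B"
  note d = carrier_matD[OF B] carrier_matD[OF F] carrier_matD[OF G1] carrier_matD[OF G2]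
  note ss = d assoc' trmult'
  have G1a': "transpose_mat B * (B * (G1 * Z)) = Z" if "dim_row Z = r" for Z :: "real mat"
  proof -
    have "transpose_mat B * (B * (G1 * Z)) = ((transpose_mat B * B) * G1) * Z" using that by (simp add: ss)
    thus ?thesis using G1a that by simp
  qed
  have G1b': "G1 * (transpose_mat B * (B * Z)) = Z" if "dim_row Z = r" for Z :: "real mat"
  proof -
    have "G1 * (transpose_mat B * (B * Z)) = (G1 * (transpose_mat B * B)) * Z" using that by (simp add: ss)
    thus ?thesis using G1b that by simp
  qed
  have G2a': "F * (transpose_mat F * (G2 * Z)) = Z" if "dim_row Z = r" for Z :: "real mat"
  proof -
    have "F * (transpose_mat F * (G2 * Z)) = ((F * transpose_mat F) * G2) * Z" using that by (simp add: ss)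
    thus ?thesis using G2a that by simp
  qed
  have G2b': "G2 * (F * (transpose_mat F * Z)) = Z" if "dim_row Z = r" for Z :: "real mat"
  proof -
    have "G2 * (F * (transpose_mat F * Z)) = (G2 * (F * transpose_mat F)) * Z" using that by (simp add: ss)
    thus ?thesis using G2b that by simp
  qed
  have MX: "M * X = B * (G1 * transpose_mat B)" unfolding MBF X_def
    by (simp add: ss G2a')
  have XM: "X * M = transpose_mat F * (G2 * F)" unfolding MBF X_def
    by (simp add: ss G1b')
  have "penrose M X" unfolding penrose_def
  proof (intro conjI)
    show "X \<in> carrier_mat (dim_col M) (dim_row M)" unfolding X_def using B F G1 G2 by auto
    show "M * X * M = M" unfolding MX unfolding MBF by (simp add: ss G1b')
    show "X * M * X = X" unfolding XM unfolding X_def by (simp add: ss G2b')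
    show "transpose_mat (M * X) = M * X" unfolding MX by (simp add: ss G1s)
    show "transpose_mat (X * M) = X * M" unfolding XM by (simp add: ss G2s)
  qed
  thus ?thesis by blast
qed

lemma pinv_penrose: "penrose M (pinv M)"
proof -
  have "\<exists>!X. penrose M X" using penrose_exists penrose_unique by blast
  hence "penrose M (THE X. penrose M X)" by (rule theI')
  thus ?thesis unfolding pinv_def penrose_def[symmetric] .
qed



lemma assocv': fixes A :: "'a::comm_semiring_0 mat"
  shows "dim_col A = dim_row B \<Longrightarrow> dim_col B = dim_vec v \<Longrightarrow> (A*B) *\<^sub>v v = A *\<^sub>v (B *\<^sub>v v)"
  by (rule assoc_mult_mat_vec[of A "dim_row A" "dim_col A" B "dim_col B"], auto)

lemma tv: fixes A :: "'a::comm_semiring_0 mat"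
  shows "dim_row A = dim_vec x \<Longrightarrow> dim_col A = dim_vec y \<Longrightarrow> x \<bullet> (A *\<^sub>v y) = (transpose_mat A *\<^sub>v x) \<bullet> y"
  by (rule transpose_vec_mult_scalar[of A "dim_row A" "dim_col A", symmetric], auto)

lemma comm': fixes x :: "'a::comm_semiring_0 vec"
  shows "dim_vec x = dim_vec y \<Longrightarrow> x \<bullet> y = y \<bullet> x"
  by (rule comm_scalar_prod[of _ "dim_vec x"], auto intro: carrier_vecI)

lemma quad_unit: "P \<in> carrier_mat n n \<Longrightarrow> i < n \<Longrightarrow> unit_vec n i \<bullet> (P *\<^sub>v unit_vec n i) = (P $$ (i,i) :: real)"
  by simp

lemma psd_diag: "psd_mat n P \<Longrightarrow> i < n \<Longrightarrow> 0 \<le> P $$ (i,i)"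
proof -
  assume P: "psd_mat n P" and i: "i < n"
  hence "0 \<le> unit_vec n i \<bullet> (P *\<^sub>v unit_vec n i)" unfolding psd_mat_def by auto
  thus ?thesis using quad_unit[of P n i] P i unfolding psd_mat_def by auto
qed

lemma psd_congr: fixes A Q :: "real mat"
  assumes Q: "psd_mat n Q" and A: "A \<in> carrier_mat m n"
  shows "psd_mat m (A * Q * transpose_mat A)"
proof -
  from Q have Qc: "Q \<in> carrier_mat n n" and Qs: "transpose_mat Q = Q"
    and Qq: "\<forall>x\<in>carrier_vec n. 0 \<le> x \<bullet> (Q *\<^sub>v x)" unfolding psd_mat_def by auto
  note d = carrier_matD[OF A] carrier_matD[OF Qc]
  show ?thesis unfolding psd_mat_def
  proof (intro conjI ballI)
    show "A * Q * transpose_mat A \<in> carrier_mat m m" using A Qc by auto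
    show "transpose_mat (A * Q * transpose_mat A) = A * Q * transpose_mat A"
      by (simp add: d assoc' trmult' Qs)
    fix x :: "real vec" assume x: "x \<in> carrier_vec m"
    have "x \<bullet> ((A * Q * transpose_mat A) *\<^sub>v x) = x \<bullet> (A *\<^sub>v (Q *\<^sub>v (transpose_mat A *\<^sub>v x)))"
      using x by (simp add: d assoc' assocv')
    also have "\<dots> = (transpose_mat A *\<^sub>v x) \<bullet> (Q *\<^sub>v (transpose_mat A *\<^sub>v x))"
      using x by (subst tv, auto simp: d)
    finally show "0 \<le> x \<bullet> ((A * Q * transpose_mat A) *\<^sub>v x)" using Qq x A by auto
  qed
qed

lemma psd_add: fixes P Q :: "real mat"
  assumes "psd_mat n P" "psd_mat n Q" shows "psd_mat n (P + Q)"
  using assms unfolding psd_mat_def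
  by (auto simp: transpose_add add_mult_distrib_mat_vec add_scalar_prod_distrib scalar_prod_add_distrib[of _ n])

lemma post_facts: fixes C P :: "real mat"
  assumes C: "C \<in> carrier_mat d n" and P: "psd_mat n P"
  defines "X \<equiv> pinv (C * P * transpose_mat C + 0\<^sub>m d d)"
  defines "T \<equiv> P * transpose_mat C * X * C * P"
  shows "psd_mat n T" "psd_mat n (P - T)"
    "\<forall>y\<in>carrier_vec d. (transpose_mat C *\<^sub>v y) \<bullet> ((P - T) *\<^sub>v (transpose_mat C *\<^sub>v y)) = 0"
proof -
  from P have Pc: "P \<in> carrier_mat n n" and Ps: "transpose_mat P = P"
    and Pq: "\<forall>x\<in>carrier_vec n. 0 \<le> x \<bullet> (P *\<^sub>v x)" unfolding psd_mat_def by auto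
  define Mm where "Mm = C * P * transpose_mat C"
  have Mmc: "Mm \<in> carrier_mat d d" unfolding Mm_def using C Pc by auto
  have Mpsd: "psd_mat d Mm" unfolding Mm_def by (rule psd_congr[OF P C])
  hence Ms: "transpose_mat Mm = Mm" unfolding psd_mat_def by auto
  have X: "X = pinv Mm" unfolding X_def Mm_def using C Pc by simp
  have pen: "penrose Mm X" unfolding X by (rule pinv_penrose)
  from pen have Xc: "X \<in> carrier_mat d d" and X1: "Mm * X * Mm = Mm" and X2: "X * Mm * X = X"
    and X3: "transpose_mat (Mm * X) = Mm * X" and X4: "transpose_mat (X * Mm) = X * Mm"
    unfolding penrose_def using Mmc by auto
  note d = carrier_matD[OF C] carrier_matD[OF Pc] carrier_matD[OF Mmc] carrier_matD[OF Xc]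
  note ss = d assoc' trmult' assocv'
  have "penrose Mm (transpose_mat X)" unfolding penrose_def
  proof (intro conjI)
    show "transpose_mat X \<in> carrier_mat (dim_col Mm) (dim_row Mm)" using Xc Mmc by auto
    show "Mm * transpose_mat X * Mm = Mm"
      using arg_cong[OF X1, of transpose_mat] by (simp add: ss Ms)
    show "transpose_mat X * Mm * transpose_mat X = transpose_mat X"
      using arg_cong[OF X2, of transpose_mat] by (simp add: ss Ms)
    show "transpose_mat (Mm * transpose_mat X) = Mm * transpose_mat X"
      using X4 by (simp add: ss Ms)
    show "transpose_mat (transpose_mat X * Mm) = transpose_mat X * Mm"
      using X3 by (simp add: ss Ms)
  qed
  hence Xs: "transpose_mat X = X" using penrose_unique pen by blast
  have X2v: "X *\<^sub>v (Mm *\<^sub>v (X *\<^sub>v w)) = X *\<^sub>v w" if "dim_vec w = d" for w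
  proof -
    have "X *\<^sub>v (Mm *\<^sub>v (X *\<^sub>v w)) = (X * Mm * X) *\<^sub>v w" using that by (simp add: ss)
    thus ?thesis using X2 by simp
  qed
  have X1v: "Mm *\<^sub>v (X *\<^sub>v (Mm *\<^sub>v w)) = Mm *\<^sub>v w" if "dim_vec w = d" for w
  proof -
    have "Mm *\<^sub>v (X *\<^sub>v (Mm *\<^sub>v w)) = (Mm * X * Mm) *\<^sub>v w" using that by (simp add: ss)
    thus ?thesis using X1 by simp
  qed
  have Tc: "T \<in> carrier_mat n n" unfolding T_def using C Pc Xc by auto
  have Tv: "T *\<^sub>v x = P *\<^sub>v (transpose_mat C *\<^sub>v (X *\<^sub>v (C *\<^sub>v (P *\<^sub>v x))))" if "dim_vec x = n" for x
    unfolding T_def using that by (simp add: ss)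
  have Mv: "Mm *\<^sub>v y = C *\<^sub>v (P *\<^sub>v (transpose_mat C *\<^sub>v y))" if "dim_vec y = d" for y
    unfolding Mm_def using that by (simp add: ss)
  have Ts: "transpose_mat T = T" unfolding T_def by (simp add: ss Ps Xs)
  have qT: "x \<bullet> (T *\<^sub>v x) = (C *\<^sub>v (P *\<^sub>v x)) \<bullet> (X *\<^sub>v (C *\<^sub>v (P *\<^sub>v x)))" if x: "x \<in> carrier_vec n" for x
  proof -
    define w where "w = C *\<^sub>v (P *\<^sub>v x)"
    define y where "y = X *\<^sub>v w"
    have dw: "dim_vec w = d" "dim_vec y = d" unfolding w_def y_def using d by auto
    have "x \<bullet> (T *\<^sub>v x) = x \<bullet> (P *\<^sub>v (transpose_mat C *\<^sub>v y))" using x Tv unfolding y_def w_def by simp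
    also have "\<dots> = (P *\<^sub>v x) \<bullet> (transpose_mat C *\<^sub>v y)" using x dw by (subst tv, auto simp: d Ps)
    also have "\<dots> = (transpose_mat C *\<^sub>v y) \<bullet> (P *\<^sub>v x)" using x dw by (subst comm', auto simp: d)
    also have "\<dots> = y \<bullet> w" unfolding w_def using x dw by (subst tv, auto simp: d)
    also have "\<dots> = w \<bullet> y" using dw by (subst comm', auto)
    finally show ?thesis unfolding y_def w_def .
  qed
  have qX: "w \<bullet> (X *\<^sub>v w) = (X *\<^sub>v w) \<bullet> (Mm *\<^sub>v (X *\<^sub>v w))" if w: "dim_vec w = d" for w
  proof -
    have "w \<bullet> (X *\<^sub>v w) = w \<bullet> (X *\<^sub>v (Mm *\<^sub>v (X *\<^sub>v w)))" using X2v[OF w] by simp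
    also have "\<dots> = (X *\<^sub>v w) \<bullet> (Mm *\<^sub>v (X *\<^sub>v w))" using w by (subst tv, auto simp: d Xs)
    finally show ?thesis .
  qed
  have qM: "(transpose_mat C *\<^sub>v y) \<bullet> (P *\<^sub>v (transpose_mat C *\<^sub>v y)) = y \<bullet> (Mm *\<^sub>v y)" if y: "dim_vec y = d" for y
    using y by (subst Mv[OF y], subst tv[of C], auto simp: d)
  show "psd_mat n T" unfolding psd_mat_def
  proof (intro conjI ballI)
    fix x :: "real vec" assume x: "x \<in> carrier_vec n"
    have "x \<bullet> (T *\<^sub>v x) = (X *\<^sub>v (C *\<^sub>v (P *\<^sub>v x))) \<bullet> (Mm *\<^sub>v (X *\<^sub>v (C *\<^sub>v (P *\<^sub>v x))))"
      using qT[OF x] qX[of "C *\<^sub>v (P *\<^sub>v x)"] d by simp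
    moreover have "X *\<^sub>v (C *\<^sub>v (P *\<^sub>v x)) \<in> carrier_vec d" using d by (auto simp: carrier_vecI)
    ultimately show "0 \<le> x \<bullet> (T *\<^sub>v x)" using Mpsd unfolding psd_mat_def by auto
  qed (insert Tc Ts, auto)
  show "psd_mat n (P - T)" unfolding psd_mat_def
  proof (intro conjI ballI)
    show "P - T \<in> carrier_mat n n" using Pc Tc by auto
    show "transpose_mat (P - T) = P - T" using Pc Tc Ps Ts by (simp add: transpose_minus)
    fix x :: "real vec" assume x: "x \<in> carrier_vec n"
    define w where "w = C *\<^sub>v (P *\<^sub>v x)"
    define y where "y = X *\<^sub>v w"
    define u where "u = transpose_mat C *\<^sub>v y"
    have dw: "dim_vec w = d" "dim_vec y = d" "u \<in> carrier_vec n" "P *\<^sub>v x \<in> carrier_vec n" "P *\<^sub>v u \<in> carrier_vec n"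
      unfolding w_def y_def u_def using d by (auto simp: carrier_vecI)
    have e1: "x \<bullet> (T *\<^sub>v x) = w \<bullet> y" using qT[OF x] unfolding w_def y_def .
    have e2: "x \<bullet> (P *\<^sub>v u) = w \<bullet> y"
    proof -
      have "x \<bullet> (P *\<^sub>v u) = x \<bullet> (T *\<^sub>v x)" using Tv x unfolding u_def y_def w_def by simp
      thus ?thesis using e1 by simp
    qed
    have e3: "u \<bullet> (P *\<^sub>v x) = x \<bullet> (P *\<^sub>v u)"
    proof -
      have "u \<bullet> (P *\<^sub>v x) = (P *\<^sub>v u) \<bullet> x" using x dw d by (subst tv, auto simp: d Ps)
      also have "\<dots> = x \<bullet> (P *\<^sub>v u)" using x dw d by (intro comm', simp)
      finally show ?thesis .
    qed
    have e4: "u \<bullet> (P *\<^sub>v u) = w \<bullet> y"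
      using qM[OF dw(2)] qX[OF dw(1)] X1v unfolding u_def y_def by simp
    have "0 \<le> (x - u) \<bullet> (P *\<^sub>v (x - u))" using Pq x dw by auto
    also have "(x - u) \<bullet> (P *\<^sub>v (x - u)) = x \<bullet> (P *\<^sub>v x) - x \<bullet> (P *\<^sub>v u) - (u \<bullet> (P *\<^sub>v x) - u \<bullet> (P *\<^sub>v u))"
      using x dw Pc by (simp add: mult_minus_distrib_mat_vec minus_scalar_prod_distrib[of _ n]
          scalar_prod_minus_distrib[of _ n])
    also have "\<dots> = x \<bullet> (P *\<^sub>v x) - x \<bullet> (T *\<^sub>v x)" using e1 e2 e3 e4 by simp
    also have "\<dots> = x \<bullet> ((P - T) *\<^sub>v x)"
      using x Pc Tc by (simp add: minus_mult_distrib_mat_vec scalar_prod_minus_distrib[of _ n])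
    finally show "0 \<le> x \<bullet> ((P - T) *\<^sub>v x)" .
  qed
  show "\<forall>y\<in>carrier_vec d. (transpose_mat C *\<^sub>v y) \<bullet> ((P - T) *\<^sub>v (transpose_mat C *\<^sub>v y)) = 0"
  proof
    fix y :: "real vec" assume y: "y \<in> carrier_vec d"
    define x where "x = transpose_mat C *\<^sub>v y"
    have x: "x \<in> carrier_vec n" unfolding x_def using d by (auto simp: carrier_vecI)
    have w: "C *\<^sub>v (P *\<^sub>v x) = Mm *\<^sub>v y" unfolding x_def using Mv y by simp
    have dy: "dim_vec y = d" using y by simp
    have "x \<bullet> (T *\<^sub>v x) = (Mm *\<^sub>v y) \<bullet> (X *\<^sub>v (Mm *\<^sub>v y))" using qT[OF x] w by simp
    also have "\<dots> = y \<bullet> (Mm *\<^sub>v (X *\<^sub>v (Mm *\<^sub>v y)))" using dy by (subst tv, auto simp: d Ms)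
    also have "\<dots> = y \<bullet> (Mm *\<^sub>v y)" using X1v[OF dy] by simp
    also have "\<dots> = x \<bullet> (P *\<^sub>v x)" unfolding x_def using qM[OF dy] by simp
    finally have "x \<bullet> ((P - T) *\<^sub>v x) = 0"
      using x Pc Tc by (simp add: minus_mult_distrib_mat_vec scalar_prod_minus_distrib[of _ n])
    thus "(transpose_mat C *\<^sub>v y) \<bullet> ((P - T) *\<^sub>v (transpose_mat C *\<^sub>v y)) = 0" unfolding x_def .
  qed
qed



lemma diag_conj: fixes Q :: "real mat"
  assumes Q: "Q \<in> carrier_mat n n" and a: "a < n" and b: "b < n"
  shows "(mat n n (\<lambda>(i, j). if i = j then lam i else 0) * Q * transpose_mat (mat n n (\<lambda>(i, j). if i = j then lam i else 0))) $$ (a,b)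
     = lam a * lam b * Q $$ (a,b)"
proof -
  let ?A = "mat n n (\<lambda>(i, j). if i = j then lam i else 0) :: real mat"
  have AQ: "(?A * Q) $$ (a,l) = lam a * Q $$ (a,l)" if l: "l < n" for l
  proof -
    have "(?A * Q) $$ (a,l) = (\<Sum>m\<in>{0..<n}. ?A $$ (a,m) * Q $$ (m,l))"
      using Q a l by (subst mult_mat_sum, auto)
    also have "\<dots> = (\<Sum>m\<in>{0..<n}. if m = a then lam a * Q $$ (a,l) else 0)"
      using a by (intro sum.cong, auto)
    also have "\<dots> = lam a * Q $$ (a,l)" using a by simp
    finally show ?thesis .
  qed
  have "(?A * Q * transpose_mat ?A) $$ (a,b) = (\<Sum>l\<in>{0..<n}. (?A * Q) $$ (a,l) * transpose_mat ?A $$ (l,b))"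
    using Q a b by (subst mult_mat_sum, auto)
  also have "\<dots> = (\<Sum>l\<in>{0..<n}. if l = b then lam a * Q $$ (a,l) * lam b else 0)"
    using b by (intro sum.cong, auto simp: AQ)
  also have "\<dots> = lam a * lam b * Q $$ (a,b)" using b by simp
  finally show ?thesis .
qed

lemma psd_diag_mat: fixes D :: "real mat"
  assumes D: "D \<in> carrier_mat n n" and off: "\<forall>a<n. \<forall>b<n. a \<noteq> b \<longrightarrow> D $$ (a,b) = 0"
    and nn: "\<forall>a<n. 0 \<le> D $$ (a,a)"
  shows "psd_mat n D"
  unfolding psd_mat_def
proof (intro conjI ballI)
  show "D \<in> carrier_mat n n" by fact
  show "transpose_mat D = D"
  proof (rule eq_matI)
    fix a b assume "a < dim_row D" "b < dim_col D"
    thus "transpose_mat D $$ (a, b) = D $$ (a, b)" using D off by (cases "a = b", auto)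
  qed (insert D, auto)
  fix x :: "real vec" assume x: "x \<in> carrier_vec n"
  have "x \<bullet> (D *\<^sub>v x) = (\<Sum>a\<in>{0..<n}. x $ a * (D *\<^sub>v x) $ a)" using x D unfolding scalar_prod_def by simp
  also have "\<dots> = (\<Sum>a\<in>{0..<n}. x $ a * (D $$ (a,a) * x $ a))"
  proof (intro sum.cong refl)
    fix a assume a: "a \<in> {0..<n}"
    have "(D *\<^sub>v x) $ a = (\<Sum>b\<in>{0..<n}. D $$ (a,b) * x $ b)"
      using a D x by (subst mult_mat_vec_sum, auto)
    also have "\<dots> = (\<Sum>b\<in>{0..<n}. if b = a then D $$ (a,a) * x $ a else 0)"
      using a off by (intro sum.cong, auto)
    also have "\<dots> = D $$ (a,a) * x $ a" using a by simp
    finally show "x $ a * (D *\<^sub>v x) $ a = x $ a * (D $$ (a,a) * x $ a)" by simp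
  qed
  also have "\<dots> \<ge> 0"
  proof (intro sum_nonneg)
    fix a assume "a \<in> {0..<n}"
    hence h: "0 \<le> D $$ (a,a) * (x $ a * x $ a)" using nn by auto
    have eq: "x $ a * (D $$ (a,a) * x $ a) = D $$ (a,a) * (x $ a * x $ a)"
      by (simp add: mult.commute mult.left_commute)
    show "0 \<le> x $ a * (D $$ (a,a) * x $ a)" unfolding eq by (rule h)
  qed
  finally show "0 \<le> x \<bullet> (D *\<^sub>v x)" .
qed




theorem lemma2:
  fixes n q :: nat and lam :: "nat \<Rightarrow> real" and W P0 S :: "real mat"
    and Cs :: "nat \<Rightarrow> real mat" and mu :: "nat \<Rightarrow> bool"
  defines "A \<equiv> mat n n (\<lambda>(i, j). if i = j then lam i else 0)"
  defines "Cm \<equiv> sel_C n q Cs mu"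
  assumes sensors: "\<forall>s<q. dim_col (Cs s) = n"
    and eig: "\<forall>i<n. \<bar>lam i\<bar> < 1"
    and W_diag: "W \<in> carrier_mat n n" "\<forall>i<n. \<forall>j<n. i \<noteq> j \<longrightarrow> W $$ (i, j) = 0"
    and W_psd: "psd_mat n W"
    and P0_psd: "psd_mat n P0"
    and lim: "kf_limit n A W Cm (0\<^sub>m (dim_row Cm) (dim_row Cm)) P0 S"
  shows "(\<forall>i<n. W $$ (i, i) \<le> S $$ (i, i) \<and> S $$ (i, i) \<le> W $$ (i, i) / (1 - (lam i)\<^sup>2))
    \<and> (\<forall>i<n. W $$ (i, i) = 0 \<longrightarrow> S $$ (i, i) = 0)
    \<and> (\<forall>i<n. lam i = 0 \<longrightarrow> S $$ (i, i) = W $$ (i, i))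
    \<and> (\<forall>i<n. W $$ (i, i) \<noteq> 0 \<and> (\<forall>r<dim_row Cm. Cm $$ (r, i) = 0)
          \<longrightarrow> S $$ (i, i) = W $$ (i, i) / (1 - (lam i)\<^sup>2))
    \<and> (\<forall>i<n. unit_vec n i \<in> row_space Cm \<longrightarrow> S $$ (i, i) = W $$ (i, i))"
proof -
  define d where "d = dim_row Cm"
  have Cc: "Cm \<in> carrier_mat d n" unfolding d_def Cm_def sel_C_def by (auto simp: mat_of_rows_def)
  have Ac: "A \<in> carrier_mat n n" unfolding A_def by auto
  define Sig where "Sig k = kf_prior A W Cm (0\<^sub>m d d) P0 k" for k
  define TT where "TT P = P * transpose_mat Cm * pinv (Cm * P * transpose_mat Cm + 0\<^sub>m d d) * Cm * P" for P
  have Ad: "(A * Q * transpose_mat A) $$ (a,b) = lam a * lam b * Q $$ (a,b)"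
    if "Q \<in> carrier_mat n n" "a < n" "b < n" for Q a b
    unfolding A_def by (rule diag_conj[OF that])
  have Xc: "pinv (Cm * P * transpose_mat Cm + 0\<^sub>m d d) \<in> carrier_mat d d" if "P \<in> carrier_mat n n" for P
    using pinv_penrose[of "Cm * P * transpose_mat Cm + 0\<^sub>m d d"] Cc that unfolding penrose_def by auto
  have TTc: "TT P \<in> carrier_mat n n" if "P \<in> carrier_mat n n" for P
    unfolding TT_def using Xc[OF that] that Cc by auto
  have Sig_Suc: "Sig (Suc k) = A * (Sig k - TT (Sig k)) * transpose_mat A + W"
    if Pc: "Sig k \<in> carrier_mat n n" for k
  proof -
    let ?P = "Sig k"
    define X where "X = pinv (Cm * ?P * transpose_mat Cm + 0\<^sub>m d d)"
    note dd = carrier_matD[OF Cc] carrier_matD[OF Ac] carrier_matD[OF Pc] carrier_matD[OF Xc[OF Pc, folded X_def]]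
    have re: "A * ?P * transpose_mat Cm * X * Cm * ?P * transpose_mat A = A * TT ?P * transpose_mat A"
      unfolding TT_def X_def[symmetric] by (simp add: dd assoc')
    have "Sig (Suc k) = A * ?P * transpose_mat A + W - A * TT ?P * transpose_mat A"
      unfolding Sig_def kf_prior.simps Let_def using re unfolding X_def by (simp add: Sig_def)
    also have "\<dots> = A * (?P - TT ?P) * transpose_mat A + W"
    proof (rule eq_matI)
      fix a b assume "a < dim_row (A * (?P - TT ?P) * transpose_mat A + W)"
        "b < dim_col (A * (?P - TT ?P) * transpose_mat A + W)"
      hence a: "a < n" and b: "b < n" using W_diag(1) by auto
      have c1: "?P - TT ?P \<in> carrier_mat n n" using Pc TTc[OF Pc] by auto
      show "(A * ?P * transpose_mat A + W - A * TT ?P * transpose_mat A) $$ (a, b) =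
        (A * (?P - TT ?P) * transpose_mat A + W) $$ (a, b)"
        using a b Pc TTc[OF Pc] W_diag(1) Ac Ad[OF Pc a b] Ad[OF TTc[OF Pc] a b] Ad[OF c1 a b]
        by (simp add: algebra_simps)
    qed (insert Ac Pc TTc[OF Pc] W_diag(1), auto)
    finally show ?thesis .
  qed
  have psd_all: "psd_mat n (Sig k)" for k
  proof (induction k)
    case 0
    then show ?case using P0_psd unfolding Sig_def by simp
  next
    case (Suc k)
    have Pc: "Sig k \<in> carrier_mat n n" using Suc unfolding psd_mat_def by auto
    have "psd_mat n (Sig k - TT (Sig k))" unfolding TT_def by (rule post_facts(2)[OF Cc Suc])
    from psd_add[OF psd_congr[OF this Ac] W_psd] show ?case unfolding Sig_Suc[OF Pc] .
  qed
  have Sigc: "Sig k \<in> carrier_mat n n" for k using psd_all[of k] unfolding psd_mat_def by auto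
  have diag_step: "Sig (Suc k) $$ (i,i) = (lam i)\<^sup>2 * (Sig k $$ (i,i) - TT (Sig k) $$ (i,i)) + W $$ (i,i)"
    if i: "i < n" for i k
  proof -
    have c1: "Sig k - TT (Sig k) \<in> carrier_mat n n" using Sigc[of k] TTc[OF Sigc[of k]] by auto
    show ?thesis unfolding Sig_Suc[OF Sigc]
      using i Ad[OF c1 i i] c1 W_diag(1) Ac Sigc[of k] TTc[OF Sigc[of k]] by (simp add: power2_eq_square)
  qed
  have T_nn: "0 \<le> TT (Sig k) $$ (i,i)" if "i < n" for i k
    using psd_diag[OF post_facts(1)[OF Cc psd_all[of k]] that] unfolding TT_def .
  have T_le: "TT (Sig k) $$ (i,i) \<le> Sig k $$ (i,i)" if i: "i < n" for i k
  proof -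
    have "0 \<le> (Sig k - TT (Sig k)) $$ (i,i)"
      using psd_diag[OF post_facts(2)[OF Cc psd_all[of k]] i] unfolding TT_def .
    thus ?thesis using i Sigc[of k] TTc[OF Sigc[of k]] by simp
  qed
  have conv: "(\<lambda>k. Sig k $$ (i,i)) \<longlonglongrightarrow> S $$ (i,i)" if "i < n" for i
    using lim that unfolding kf_limit_def Sig_def d_def by auto
  have convS: "(\<lambda>k. Sig (Suc k) $$ (i,i)) \<longlonglongrightarrow> S $$ (i,i)" if "i < n" for i
    using LIMSEQ_Suc[OF conv[OF that]] .
  have lam1: "0 < 1 - (lam i)\<^sup>2" if "i < n" for i
  proof -
    have "\<bar>lam i\<bar> < 1" using eig that by auto
    hence "(lam i)\<^sup>2 < 1" by (simp add: abs_square_less_1)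
    thus ?thesis by simp
  qed
  have lower: "W $$ (i,i) \<le> S $$ (i,i)" if i: "i < n" for i
  proof (rule LIMSEQ_le_const[OF convS[OF i]], intro exI allI impI)
    fix k :: nat
    have "0 \<le> (lam i)\<^sup>2 * (Sig k $$ (i,i) - TT (Sig k) $$ (i,i))"
      using T_le[OF i, of k] by simp
    thus "W $$ (i,i) \<le> Sig (Suc k) $$ (i,i)" unfolding diag_step[OF i] by simp
  qed
  have upper: "S $$ (i,i) \<le> W $$ (i,i) / (1 - (lam i)\<^sup>2)" if i: "i < n" for i
  proof -
    have lim2: "(\<lambda>k. (lam i)\<^sup>2 * Sig k $$ (i,i) + W $$ (i,i)) \<longlonglongrightarrow> (lam i)\<^sup>2 * S $$ (i,i) + W $$ (i,i)"
      by (intro tendsto_intros conv[OF i])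
    have "S $$ (i,i) \<le> (lam i)\<^sup>2 * S $$ (i,i) + W $$ (i,i)"
    proof (rule LIMSEQ_le[OF convS[OF i] lim2], intro exI allI impI)
      fix k :: nat
      have "(lam i)\<^sup>2 * (Sig k $$ (i,i) - TT (Sig k) $$ (i,i)) \<le> (lam i)\<^sup>2 * Sig k $$ (i,i)"
        using T_nn[OF i, of k] by (intro mult_left_mono, auto)
      thus "Sig (Suc k) $$ (i,i) \<le> (lam i)\<^sup>2 * Sig k $$ (i,i) + W $$ (i,i)"
        unfolding diag_step[OF i] by simp
    qed
    hence "S $$ (i,i) * (1 - (lam i)\<^sup>2) \<le> W $$ (i,i)" by (simp add: algebra_simps)
    thus ?thesis using lam1[OF i] by (simp add: pos_le_divide_eq)
  qed
  have partA: "\<forall>i<n. W $$ (i, i) \<le> S $$ (i, i) \<and> S $$ (i, i) \<le> W $$ (i, i) / (1 - (lam i)\<^sup>2)"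
    using lower upper by auto
  have partB: "\<forall>i<n. W $$ (i, i) = 0 \<longrightarrow> S $$ (i, i) = 0"
    using lower upper by (metis div_0 order_antisym)
  have partC: "\<forall>i<n. lam i = 0 \<longrightarrow> S $$ (i, i) = W $$ (i, i)"
  proof (intro allI impI)
    fix i assume i: "i < n" and l: "lam i = 0"
    show "S $$ (i, i) = W $$ (i, i)" using lower[OF i] upper[OF i] l by simp
  qed
  have partE: "\<forall>i<n. unit_vec n i \<in> row_space Cm \<longrightarrow> S $$ (i, i) = W $$ (i, i)"
  proof (intro allI impI)
    fix i assume i: "i < n" and rs: "unit_vec n i \<in> row_space Cm"
    then obtain y where y: "y \<in> carrier_vec d" and e: "unit_vec n i = transpose_mat Cm *\<^sub>v y"
      unfolding row_space_def d_def by auto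
    have z: "(Sig k - TT (Sig k)) $$ (i,i) = 0" for k
    proof -
      have c1: "Sig k - TT (Sig k) \<in> carrier_mat n n" using Sigc[of k] TTc[OF Sigc[of k]] by auto
      have "unit_vec n i \<bullet> ((Sig k - TT (Sig k)) *\<^sub>v unit_vec n i) = 0"
        using post_facts(3)[OF Cc psd_all[of k]] y unfolding e TT_def by auto
      thus ?thesis using quad_unit[OF c1 i] by simp
    qed
    have "Sig (Suc k) $$ (i,i) = W $$ (i,i)" for k
      using z[of k] i Sigc[of k] TTc[OF Sigc[of k]] unfolding diag_step[OF i] by simp
    hence "(\<lambda>k. Sig (Suc k) $$ (i,i)) \<longlonglongrightarrow> W $$ (i,i)" by simp
    thus "S $$ (i, i) = W $$ (i, i)" using convS[OF i] LIMSEQ_unique by blast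
  qed
  have partD: "\<forall>i<n. W $$ (i, i) \<noteq> 0 \<and> (\<forall>r<dim_row Cm. Cm $$ (r, i) = 0)
          \<longrightarrow> S $$ (i, i) = W $$ (i, i) / (1 - (lam i)\<^sup>2)"
  proof (intro allI impI)
    fix i assume i: "i < n" and h: "W $$ (i, i) \<noteq> 0 \<and> (\<forall>r<dim_row Cm. Cm $$ (r, i) = 0)"
    hence col0: "\<forall>r<d. Cm $$ (r, i) = 0" unfolding d_def by auto
    note dC = carrier_matD[OF Cc]
    define E :: "real mat" where "E = mat n n (\<lambda>(a,b). if a = i \<and> b = i then 1 else 0)"
    define L where "L = W $$ (i,i) / (1 - (lam i)\<^sup>2)"
    define v where "v k = L - ((lam i)\<^sup>2) ^ k * L" for k
    have WL: "W $$ (i,i) = L * (1 - (lam i)\<^sup>2)" unfolding L_def using lam1[OF i] by simp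
    have vrec: "v (Suc k) = (lam i)\<^sup>2 * v k + W $$ (i,i)" for k
      unfolding v_def WL by (simp add: algebra_simps)
    have Ec: "E \<in> carrier_mat n n" unfolding E_def by auto
    have TT_eq: "TT P = TT R" if Pc: "P \<in> carrier_mat n n" and Rc: "R \<in> carrier_mat n n"
      and PR: "\<forall>a<n. \<forall>b<n. (a,b) \<noteq> (i,i) \<longrightarrow> P $$ (a,b) = R $$ (a,b)" for P R
    proof -
      have CP: "Cm * P = Cm * R"
      proof (rule eq_matI)
        fix r b assume "r < dim_row (Cm * R)" "b < dim_col (Cm * R)"
        hence r: "r < d" and b: "b < n" using Cc Rc by auto
        have "(Cm * P) $$ (r,b) = (\<Sum>l\<in>{0..<n}. Cm $$ (r,l) * P $$ (l,b))"
          using r b Cc Pc by (subst mult_mat_sum, auto)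
        also have "\<dots> = (\<Sum>l\<in>{0..<n}. Cm $$ (r,l) * R $$ (l,b))"
        proof (rule sum.cong[OF refl])
          fix l assume l: "l \<in> {0..<n}"
          show "Cm $$ (r,l) * P $$ (l,b) = Cm $$ (r,l) * R $$ (l,b)"
            using PR col0 r b l by (cases "(l,b) = (i,i)", auto)
        qed
        also have "\<dots> = (Cm * R) $$ (r,b)"
          using r b Cc Rc by (subst mult_mat_sum, auto)
        finally show "(Cm * P) $$ (r,b) = (Cm * R) $$ (r,b)" .
      qed (insert Cc Pc Rc, auto)
      have PC: "P * transpose_mat Cm = R * transpose_mat Cm"
      proof (rule eq_matI)
        fix a r assume "a < dim_row (R * transpose_mat Cm)" "r < dim_col (R * transpose_mat Cm)"
        hence a: "a < n" and r: "r < d" using Cc Rc by auto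
        have "(P * transpose_mat Cm) $$ (a,r) = (\<Sum>l\<in>{0..<n}. P $$ (a,l) * Cm $$ (r,l))"
          using r a Cc Pc by (subst mult_mat_sum, auto)
        also have "\<dots> = (\<Sum>l\<in>{0..<n}. R $$ (a,l) * Cm $$ (r,l))"
        proof (rule sum.cong[OF refl])
          fix l assume l: "l \<in> {0..<n}"
          show "P $$ (a,l) * Cm $$ (r,l) = R $$ (a,l) * Cm $$ (r,l)"
            using PR col0 r a l by (cases "(a,l) = (i,i)", auto)
        qed
        also have "\<dots> = (R * transpose_mat Cm) $$ (a,r)"
          using r a Cc Rc by (subst mult_mat_sum, auto)
        finally show "(P * transpose_mat Cm) $$ (a,r) = (R * transpose_mat Cm) $$ (a,r)" .
      qed (insert Cc Pc Rc, auto)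
      note dd = dC carrier_matD[OF Pc] carrier_matD[OF Rc]
      have M: "Cm * P * transpose_mat Cm = Cm * R * transpose_mat Cm" using CP by simp
      define X where "X = pinv (Cm * R * transpose_mat Cm + 0\<^sub>m d d)"
      have XX: "X \<in> carrier_mat d d" using Xc[OF Rc] unfolding X_def .
      note dX = carrier_matD[OF XX]
      have "TT P = ((P * transpose_mat Cm) * X) * (Cm * P)"
        unfolding TT_def M X_def[symmetric] by (simp add: dd dX assoc')
      also have "\<dots> = ((R * transpose_mat Cm) * X) * (Cm * R)" unfolding CP PC ..
      also have "\<dots> = TT R" unfolding TT_def X_def[symmetric] by (simp add: dd dX assoc')
      finally show ?thesis .
    qed
    have dec: "psd_mat n (Sig k - v k \<cdot>\<^sub>m E)" for k
    proof (induction k)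
      case 0
      have "Sig 0 - v 0 \<cdot>\<^sub>m E = P0" unfolding v_def Sig_def using P0_psd Ec
        unfolding psd_mat_def by (intro eq_matI, auto)
      then show ?case using P0_psd by simp
    next
      case (Suc k)
      let ?P = "Sig k"
      let ?R = "Sig k - v k \<cdot>\<^sub>m E"
      have Pc: "?P \<in> carrier_mat n n" by (rule Sigc)
      have Rc: "?R \<in> carrier_mat n n" using Pc Ec by auto
      have TPR: "TT ?P = TT ?R"
        by (rule TT_eq[OF Pc Rc], insert Pc Ec, auto simp: E_def)
      define W' where "W' = W - W $$ (i,i) \<cdot>\<^sub>m E"
      have W'psd: "psd_mat n W'"
      proof (rule psd_diag_mat)
        show "W' \<in> carrier_mat n n" unfolding W'_def using W_diag(1) Ec by auto
        show "\<forall>a<n. \<forall>b<n. a \<noteq> b \<longrightarrow> W' $$ (a, b) = 0"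
          unfolding W'_def E_def using W_diag by auto
        show "\<forall>a<n. 0 \<le> W' $$ (a, a)"
          unfolding W'_def E_def using W_diag psd_diag[OF W_psd] by auto
      qed
      have c1: "?R - TT ?R \<in> carrier_mat n n" using Rc TTc[OF Rc] by auto
      have c2: "?P - TT ?P \<in> carrier_mat n n" using Pc TTc[OF Pc] by auto
      have eqn: "Sig (Suc k) - v (Suc k) \<cdot>\<^sub>m E = A * (?R - TT ?R) * transpose_mat A + W'"
      proof (rule eq_matI)
        fix a b assume "a < dim_row (A * (?R - TT ?R) * transpose_mat A + W')"
          "b < dim_col (A * (?R - TT ?R) * transpose_mat A + W')"
        hence a: "a < n" and b: "b < n" using W_diag(1) Ec unfolding W'_def by auto
        have "(Sig (Suc k) - v (Suc k) \<cdot>\<^sub>m E) $$ (a,b) =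
          lam a * lam b * (?P - TT ?P) $$ (a,b) + W $$ (a,b) - v (Suc k) * E $$ (a,b)"
          unfolding Sig_Suc[OF Pc] using a b Ad[OF c2 a b] c2 W_diag(1) Ec Ac by simp
        also have "\<dots> = lam a * lam b * (?R - TT ?R) $$ (a,b) + W' $$ (a,b)"
          unfolding TPR[symmetric] W'_def using a b Pc Ec TTc[OF Pc] W_diag(1) vrec[of k]
          by (auto simp: E_def power2_eq_square algebra_simps)
        also have "\<dots> = (A * (?R - TT ?R) * transpose_mat A) $$ (a,b) + W' $$ (a,b)"
          by (simp only: Ad[OF c1 a b])
        also have "\<dots> = (A * (?R - TT ?R) * transpose_mat A + W') $$ (a,b)"
          using a b W_diag(1) Ec unfolding W'_def by (intro index_add_mat(1)[symmetric], auto)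
        finally show "(Sig (Suc k) - v (Suc k) \<cdot>\<^sub>m E) $$ (a,b) = (A * (?R - TT ?R) * transpose_mat A + W') $$ (a,b)" .
      qed (insert Ac c1 W_diag(1) Ec Sigc, auto simp: W'_def)
      have psdR: "psd_mat n (?R - TT ?R)" unfolding TT_def by (rule post_facts(2)[OF Cc Suc.IH])
      show ?case unfolding eqn by (rule psd_add[OF psd_congr[OF psdR Ac] W'psd])
    qed
    have vle: "v k \<le> Sig k $$ (i,i)" for k
    proof -
      have "0 \<le> (Sig k - v k \<cdot>\<^sub>m E) $$ (i,i)" by (rule psd_diag[OF dec i])
      thus ?thesis using i Sigc[of k] Ec unfolding E_def by simp
    qed
    have "norm ((lam i)\<^sup>2) < 1" using lam1[OF i] by simp
    hence "(\<lambda>k. ((lam i)\<^sup>2) ^ k) \<longlonglongrightarrow> 0" by (rule LIMSEQ_power_zero)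
    hence "v \<longlonglongrightarrow> L - 0 * L" unfolding v_def[abs_def]
      by (rule tendsto_diff[OF tendsto_const tendsto_mult[OF _ tendsto_const]])
    hence "v \<longlonglongrightarrow> L" by simp
    hence "L \<le> S $$ (i,i)" using conv[OF i] vle by (intro LIMSEQ_le[of v L _ "S $$ (i,i)"], auto)
    thus "S $$ (i, i) = W $$ (i, i) / (1 - (lam i)\<^sup>2)" using upper[OF i] unfolding L_def by simp
  qed
  show ?thesis using partA partB partC partD partE by blast
qed

end
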